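(* Let $S$ be a state of a $1$-dimensional Hegselmann–Krause system with social network $G=(V,E)$ and confidence bound $\varepsilon>0$, and let $c\in\mathbb{R}$. Let $V_\ell=\{v\in V: x_v\le c\}$, $V_r=V\setminus V_\ell$, and $E_{\ell,r}=\{\{u,w\}\in E_I: u\in V_\ell,\ w\in V_r\}$. Then $$\sum_{v\in V}|N_v|\,|m_v|\ \ge\ 2\sum_{\{u,w\}\in E_{\ell,r}}|x_u-x_w|.$$
   Context: A $1$-dimensional Hegselmann–Krause system has a finite undirected graph $G=(V,E)$ (social network), a confidence bound $\varepsilon>0$, and a state given by positions $x_v\in\mathbb{R}$. In a state, $N_v=\{u:\{u,v\}\in E,\ |x_u-x_v|\le\varepsilon\}\cup\{v\}$ is the influencing neighborhood of $v$, $m_v=\frac{1}{|N_v|}\sum_{u\in N_v}(x_u-x_v)$ is its movement, and $E_I=\{\{u,v\}\in E:|x_u-x_v|\le\varepsilon\}$ is the edge set of the influence network. *)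

theory Defs
  imports Complex_Main
begin

definition hk_graph :: "'a set \<Rightarrow> 'a set set \<Rightarrow> bool" where
  "hk_graph V E \<longleftrightarrow> finite V \<and> (\<forall>e\<in>E. \<exists>u w. e = {u, w} \<and> u \<noteq> w \<and> u \<in> V \<and> w \<in> V)"

definition infl_nbhd :: "'a set set \<Rightarrow> real \<Rightarrow> ('a \<Rightarrow> real) \<Rightarrow> 'a \<Rightarrow> 'a set" where
  "infl_nbhd E eps x v = {u. {u, v} \<in> E \<and> \<bar>x u - x v\<bar> \<le> eps} \<union> {v}"

definition movement :: "'a set set \<Rightarrow> real \<Rightarrow> ('a \<Rightarrow> real) \<Rightarrow> 'a \<Rightarrow> real" where
  "movement E eps x v =
     (1 / real (card (infl_nbhd E eps x v))) * (\<Sum>u\<in>infl_nbhd E eps x v. x u - x v)"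

definition infl_edges :: "'a set set \<Rightarrow> real \<Rightarrow> ('a \<Rightarrow> real) \<Rightarrow> 'a set set" where
  "infl_edges E eps x = {e \<in> E. \<forall>u\<in>e. \<forall>w\<in>e. \<bar>x u - x w\<bar> \<le> eps}"

end

theory Submission
  imports Defs
begin

lemma swap_zero:
  fixes g :: "'a \<Rightarrow> 'a \<Rightarrow> real"
  assumes "\<And>u v. g u v = - g v u"
  shows "(\<Sum>v\<in>A. \<Sum>u\<in>A. g u v) = 0"
proof -
  have "(\<Sum>v\<in>A. \<Sum>u\<in>A. g u v) = (\<Sum>u\<in>A. \<Sum>v\<in>A. g u v)" by (rule sum.swap)
  also have "\<dots> = (\<Sum>u\<in>A. \<Sum>v\<in>A. - g v u)" by (intro sum.cong refl) (rule assms)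
  also have "\<dots> = - (\<Sum>v\<in>A. \<Sum>u\<in>A. g u v)" by (simp add: sum_negf)
  finally show ?thesis by simp
qed

theorem lemma2:
  fixes V :: "'a set" and E :: "'a set set" and eps c :: real and x :: "'a \<Rightarrow> real"
  assumes "hk_graph V E" and "eps > 0"
  defines "Vl \<equiv> {v \<in> V. x v \<le> c}"
  defines "Vr \<equiv> V - Vl"
  defines "Elr \<equiv> {(u, w). {u, w} \<in> infl_edges E eps x \<and> u \<in> Vl \<and> w \<in> Vr}"
  shows "(\<Sum>v\<in>V. real (card (infl_nbhd E eps x v)) * \<bar>movement E eps x v\<bar>)
           \<ge> 2 * (\<Sum>(u, w)\<in>Elr. \<bar>x u - x w\<bar>)"
proof -
  define R where "R u v \<longleftrightarrow> {u, v} \<in> E \<and> \<bar>x u - x v\<bar> \<le> eps" for u v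
  have Rsym: "R u v = R v u" for u v unfolding R_def by (auto simp: insert_commute abs_minus_commute)
  have finV: "finite V" using assms(1) unfolding hk_graph_def by blast
  have RV: "R u v \<Longrightarrow> u \<in> V \<and> v \<in> V \<and> u \<noteq> v" for u v
  proof -
    assume "R u v"
    then have "{u, v} \<in> E" unfolding R_def by blast
    then obtain a b where "{u, v} = {a, b}" "a \<noteq> b" "a \<in> V" "b \<in> V"
      using assms(1) unfolding hk_graph_def by blast
    then show ?thesis by (metis doubleton_eq_iff)
  qed
  define a where "a v = (\<Sum>u\<in>V. if R u v then x u - x v else 0)" for v
  have La: "real (card (infl_nbhd E eps x v)) * \<bar>movement E eps x v\<bar> = \<bar>a v\<bar>" if "v \<in> V" for v
  proof -
    have N: "infl_nbhd E eps x v = insert v {u \<in> V. R u v}"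
      unfolding infl_nbhd_def R_def using RV unfolding R_def by blast
    have fin: "finite (infl_nbhd E eps x v)" using N finV by simp
    have pos: "card (infl_nbhd E eps x v) > 0" using fin N by (simp add: card_gt_0_iff)
    have "real (card (infl_nbhd E eps x v)) * \<bar>movement E eps x v\<bar>
        = \<bar>\<Sum>u\<in>infl_nbhd E eps x v. x u - x v\<bar>"
      unfolding movement_def using pos by (simp add: abs_mult)
    also have "(\<Sum>u\<in>infl_nbhd E eps x v. x u - x v) = (\<Sum>u\<in>{u \<in> V. R u v}. x u - x v)"
      unfolding N using finV by (cases "v \<in> {u \<in> V. R u v}") (simp_all add: insert_absorb)
    also have "\<dots> = a v" unfolding a_def using finV by (simp add: sum.inter_filter)
    finally show ?thesis .
  qed
  have VU: "V = Vl \<union> Vr" "Vl \<inter> Vr = {}" unfolding Vl_def Vr_def by auto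
  have finl: "finite Vl" "finite Vr" using finV VU by (metis finite_Un)+
  have split: "(\<Sum>u\<in>V. f u) = (\<Sum>u\<in>Vl. f u) + (\<Sum>u\<in>Vr. f u)" for f :: "'a \<Rightarrow> real"
    using VU finl by (simp add: sum.union_disjoint)
  define D where "D = (\<Sum>v\<in>Vl. \<Sum>u\<in>Vr. if R v u then \<bar>x v - x u\<bar> else 0)"
  have LHS: "(\<Sum>v\<in>V. real (card (infl_nbhd E eps x v)) * \<bar>movement E eps x v\<bar>) = (\<Sum>v\<in>V. \<bar>a v\<bar>)"
    using La by simp
  have ge: "(\<Sum>v\<in>V. \<bar>a v\<bar>) \<ge> (\<Sum>v\<in>Vl. a v) + (\<Sum>v\<in>Vr. - a v)"
    unfolding split by (intro add_mono sum_mono) auto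
  have z1: "(\<Sum>v\<in>Vl. \<Sum>u\<in>Vl. if R u v then x u - x v else 0) = 0"
    by (rule swap_zero) (auto simp: Rsym)
  have z2: "(\<Sum>v\<in>Vr. \<Sum>u\<in>Vr. if R u v then x v - x u else 0) = 0"
    by (rule swap_zero) (auto simp: Rsym)
  have lr: "x v \<le> c" "c < x u" if "v \<in> Vl" "u \<in> Vr" for u v
    using that unfolding Vl_def Vr_def by auto
  have A1: "(\<Sum>v\<in>Vl. a v) = D"
  proof -
    have "(\<Sum>v\<in>Vl. a v) = (\<Sum>v\<in>Vl. \<Sum>u\<in>Vl. if R u v then x u - x v else 0)
          + (\<Sum>v\<in>Vl. \<Sum>u\<in>Vr. if R u v then x u - x v else 0)"
      unfolding a_def split by (simp add: sum.distrib)
    also have "(\<Sum>v\<in>Vl. \<Sum>u\<in>Vr. if R u v then x u - x v else 0) = D"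
      unfolding D_def
    proof (intro sum.cong refl)
      fix v u assume "v \<in> Vl" "u \<in> Vr"
      then have eq: "\<bar>x v - x u\<bar> = x u - x v" using lr[of v u] by simp
      show "(if R u v then x u - x v else 0) = (if R v u then \<bar>x v - x u\<bar> else 0)"
        unfolding Rsym[of u v] eq by (rule refl)
    qed
    finally show ?thesis using z1 by simp
  qed
  have A2: "(\<Sum>v\<in>Vr. - a v) = D"
  proof -
    have "(\<Sum>v\<in>Vr. - a v) = (\<Sum>v\<in>Vr. \<Sum>u\<in>Vl. if R u v then x v - x u else 0)
          + (\<Sum>v\<in>Vr. \<Sum>u\<in>Vr. if R u v then x v - x u else 0)"
      unfolding a_def split by (simp add: sum.distrib sum_negf[symmetric] if_distrib cong: if_cong)
    also have "(\<Sum>v\<in>Vr. \<Sum>u\<in>Vl. if R u v then x v - x u else 0) = D"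
      unfolding D_def
    proof (subst sum.swap, intro sum.cong refl)
      fix v u assume "v \<in> Vl" "u \<in> Vr"
      then have eq: "\<bar>x v - x u\<bar> = x u - x v" using lr[of v u] by simp
      show "(if R v u then x u - x v else 0) = (if R v u then \<bar>x v - x u\<bar> else 0)"
        unfolding eq by (rule refl)
    qed
    finally show ?thesis using z2 by simp
  qed
  have ElrE: "Elr = {p \<in> Vl \<times> Vr. R (fst p) (snd p)}"
    unfolding Elr_def infl_edges_def R_def
    by (auto simp: abs_minus_commute)
  have "(\<Sum>(u, w)\<in>Elr. \<bar>x u - x w\<bar>) = D"
  proof -
    have "(\<Sum>(u, w)\<in>Elr. \<bar>x u - x w\<bar>) = (\<Sum>p\<in>Vl \<times> Vr. if R (fst p) (snd p) then \<bar>x (fst p) - x (snd p)\<bar> else 0)"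
      unfolding ElrE using finl by (subst sum.inter_filter[symmetric]) (auto simp: case_prod_beta)
    also have "\<dots> = D" unfolding D_def sum.cartesian_product by (simp add: case_prod_beta)
    finally show ?thesis .
  qed
  then show ?thesis using LHS ge A1 A2 by simp
qed

end
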